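(* Let $\Gamma$ be a $(d+1)$-vertex-connected graph with at least $d+1$ vertices, and let $(q,\Gamma)$ be a framework in $\mathbb{R}^d$ with the convex containment property. Then there is a non-symmetric equilibrium stress matrix $\Omega$ of $(q,\Gamma)$ with co-rank $d+1$ (i.e., $\dim\ker\Omega=d+1$).
   Context: A framework $(q,\Gamma)$ in $\mathbb{R}^d$ has the convex containment property if (1) for each vertex, the positions of its neighbors have affine span of dimension $d$, and (2) there is a set of $d+1$ exceptional vertices such that every other vertex $i$ has $q(i)$ in the interior of the convex hull of the positions of its neighbors. A non-symmetric equilibrium stress matrix of $(q,\Gamma)$ is a real matrix $\Omega$ indexed by $V\times V$ with $\Omega(u,w)=0$ whenever $u\ne w$ and $\{u,w\}$ is not an edge, $\sum_w\Omega(u,w)=0$ for all $u$, and $\sum_w\Omega(u,w)q(w)=0$ for all $u$. *)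

theory Defs
  imports "HOL-Analysis.Analysis"
begin

definition simple_graph :: "('v \<Rightarrow> 'v \<Rightarrow> bool) \<Rightarrow> bool" where
  "simple_graph E \<longleftrightarrow> (\<forall>u w. E u w \<longrightarrow> E w u) \<and> (\<forall>u. \<not> E u u)"

definition neighbors :: "('v \<Rightarrow> 'v \<Rightarrow> bool) \<Rightarrow> 'v \<Rightarrow> 'v set" where
  "neighbors E i = {j. E i j}"

definition connected_on :: "('v \<Rightarrow> 'v \<Rightarrow> bool) \<Rightarrow> 'v set \<Rightarrow> bool" where
  "connected_on E S \<longleftrightarrow>
     (\<forall>u\<in>S. \<forall>w\<in>S. (\<lambda>a b. E a b \<and> a \<in> S \<and> b \<in> S)\<^sup>*\<^sup>* u w)"

text \<open>k-vertex-connectivity: deleting any set of fewer than k vertices leaves a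
connected graph. (The vertex count condition is stated separately.)\<close>
definition vertex_connected :: "nat \<Rightarrow> ('v \<Rightarrow> 'v \<Rightarrow> bool) \<Rightarrow> bool" where
  "vertex_connected k E \<longleftrightarrow> (\<forall>X. card X < k \<longrightarrow> connected_on E (UNIV - X))"

definition convex_containment ::
    "('v::finite \<Rightarrow> real^'d) \<Rightarrow> ('v \<Rightarrow> 'v \<Rightarrow> bool) \<Rightarrow> bool" where
  "convex_containment q E \<longleftrightarrow>
     (\<forall>i. aff_dim (q ` neighbors E i) = int CARD('d)) \<and>
     (\<exists>X. card X = CARD('d) + 1 \<and>
          (\<forall>i. i \<notin> X \<longrightarrow> q i \<in> interior (convex hull (q ` neighbors E i))))"

definition nonsym_equilibrium_stress ::
    "('v::finite \<Rightarrow> real^'d) \<Rightarrow> ('v \<Rightarrow> 'v \<Rightarrow> bool) \<Rightarrow> real^'v^'v \<Rightarrow> bool" where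
  "nonsym_equilibrium_stress q E \<Omega> \<longleftrightarrow>
     (\<forall>u w. u \<noteq> w \<and> \<not> E u w \<longrightarrow> \<Omega> $ u $ w = 0) \<and>
     (\<forall>u. (\<Sum>w\<in>UNIV. \<Omega> $ u $ w) = 0) \<and>
     (\<forall>u. (\<Sum>w\<in>UNIV. \<Omega> $ u $ w *\<^sub>R q w) = 0)"

end

theory Submission
  imports Defs
begin

lemma hull_vertex_comb:
  fixes q :: "'v \<Rightarrow> 'a::real_vector"
  assumes "finite N"
  shows "convex hull (q ` N) \<subseteq> {y. \<exists>\<mu>. (\<forall>j\<in>N. 0 \<le> \<mu> j) \<and> sum \<mu> N = 1 \<and> (\<Sum>j\<in>N. \<mu> j *\<^sub>R q j) = y}"
proof (rule hull_minimal)
  show "q ` N \<subseteq> {y. \<exists>\<mu>. (\<forall>j\<in>N. 0 \<le> \<mu> j) \<and> sum \<mu> N = 1 \<and> (\<Sum>j\<in>N. \<mu> j *\<^sub>R q j) = y}"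
  proof
    fix y assume "y \<in> q ` N"
    then obtain j0 where j0: "j0 \<in> N" "y = q j0" by auto
    let ?\<mu> = "\<lambda>j. if j = j0 then 1 else (0::real)"
    have "sum ?\<mu> N = 1" using j0 assms by (simp add: sum.delta)
    moreover have "(\<Sum>j\<in>N. ?\<mu> j *\<^sub>R q j) = y"
    proof -
      have "\<And>j. ?\<mu> j *\<^sub>R q j = (if j = j0 then q j else 0)" by simp
      then have "(\<Sum>j\<in>N. ?\<mu> j *\<^sub>R q j) = (\<Sum>j\<in>N. if j = j0 then q j else 0)"
        by (rule sum.cong[OF refl])
      then show ?thesis using j0 assms by (simp add: sum.delta)
    qed
    ultimately show "y \<in> {y. \<exists>\<mu>. (\<forall>j\<in>N. 0 \<le> \<mu> j) \<and> sum \<mu> N = 1 \<and> (\<Sum>j\<in>N. \<mu> j *\<^sub>R q j) = y}"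
      by (intro CollectI exI[of _ ?\<mu>]) auto
  qed
  show "convex {y. \<exists>\<mu>. (\<forall>j\<in>N. 0 \<le> \<mu> j) \<and> sum \<mu> N = 1 \<and> (\<Sum>j\<in>N. \<mu> j *\<^sub>R q j) = y}"
  proof (rule convexI)
    fix x y assume "x \<in> {y. \<exists>\<mu>. (\<forall>j\<in>N. 0 \<le> \<mu> j) \<and> sum \<mu> N = 1 \<and> (\<Sum>j\<in>N. \<mu> j *\<^sub>R q j) = y}"
      "y \<in> {y. \<exists>\<mu>. (\<forall>j\<in>N. 0 \<le> \<mu> j) \<and> sum \<mu> N = 1 \<and> (\<Sum>j\<in>N. \<mu> j *\<^sub>R q j) = y}"
    then obtain \<mu> \<nu> where m: "\<forall>j\<in>N. 0 \<le> \<mu> j" "sum \<mu> N = 1" "(\<Sum>j\<in>N. \<mu> j *\<^sub>R q j) = x"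
      and n: "\<forall>j\<in>N. 0 \<le> \<nu> j" "sum \<nu> N = 1" "(\<Sum>j\<in>N. \<nu> j *\<^sub>R q j) = y" by auto
    fix u v :: real assume uv: "0 \<le> u" "0 \<le> v" "u + v = 1"
    let ?w = "\<lambda>j. u * \<mu> j + v * \<nu> j"
    have A: "\<forall>j\<in>N. 0 \<le> ?w j" using m n uv by auto
    have B: "sum ?w N = 1" proof -
      have "sum ?w N = u * sum \<mu> N + v * sum \<nu> N" by (simp only: sum.distrib sum_distrib_left)
      then show ?thesis using m n uv by simp
    qed
    have C: "(\<Sum>j\<in>N. ?w j *\<^sub>R q j) = u *\<^sub>R x + v *\<^sub>R y"
      unfolding m(3)[symmetric] n(3)[symmetric]
      by (simp only: scaleR_add_left sum.distrib scaleR_sum_right scaleR_scaleR)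
    show "u *\<^sub>R x + v *\<^sub>R y \<in> {y. \<exists>\<mu>. (\<forall>j\<in>N. 0 \<le> \<mu> j) \<and> sum \<mu> N = 1 \<and> (\<Sum>j\<in>N. \<mu> j *\<^sub>R q j) = y}"
      apply (rule CollectI, rule exI[of _ ?w])
      using A B C by blast
  qed
qed

lemma interior_pos_weights:
  fixes q :: "'v \<Rightarrow> 'a::real_normed_vector"
  assumes fin: "finite N" and p: "p \<in> interior (convex hull (q ` N))"
  shows "\<exists>w. (\<forall>j\<in>N. 0 < w j) \<and> sum w N = 1 \<and> (\<Sum>j\<in>N. w j *\<^sub>R q j) = p"
proof -
  have "N \<noteq> {}" using p by auto
  then have cN: "card N > 0" using fin by (simp add: card_gt_0_iff)
  define c where "c = (\<Sum>j\<in>N. (1 / real (card N)) *\<^sub>R q j)"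
  obtain e where e: "e > 0" "ball p e \<subseteq> convex hull (q ` N)"
    using p by (meson mem_interior)
  define t where "t = e / (2 * (norm (p - c) + 1))"
  have "0 < 2 * (norm (p - c) + 1)" by (simp add: add_nonneg_pos)
  then have t: "t > 0" unfolding t_def using e(1) by (meson divide_pos_pos)
  have "norm (t *\<^sub>R (p - c)) < e"
  proof -
    have "norm (t *\<^sub>R (p - c)) = t * norm (p - c)" using t by simp
    also have "\<dots> \<le> t * (norm (p - c) + 1)" using t by simp
    also have "\<dots> = e / 2" proof -
      have n1: "norm (p - c) + 1 \<noteq> 0" using norm_ge_zero[of "p - c"] by linarith
      have gen: "e / (2 * a) * a = e / 2" if "a \<noteq> 0" for a :: real using that by simp
      show ?thesis unfolding t_def using gen[OF n1] .
    qed
    also have "\<dots> < e" using e by simp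
    finally show ?thesis .
  qed
  then have "p + t *\<^sub>R (p - c) \<in> ball p e" by (simp add: dist_norm)
  then have "p + t *\<^sub>R (p - c) \<in> convex hull (q ` N)" using e by blast
  then obtain \<mu> where m: "\<forall>j\<in>N. 0 \<le> \<mu> j" "sum \<mu> N = 1"
    "(\<Sum>j\<in>N. \<mu> j *\<^sub>R q j) = p + t *\<^sub>R (p - c)"
    using hull_vertex_comb[OF fin, of q] by blast
  define w where "w j = (\<mu> j + t / real (card N)) / (1 + t)" for j
  have A: "\<forall>j\<in>N. 0 < w j" using m t cN by (auto simp: w_def add_nonneg_pos)
  have B: "sum w N = 1"
  proof -
    have "sum w N = (sum \<mu> N + real (card N) * (t / real (card N))) / (1 + t)"
      unfolding w_def by (simp add: sum_divide_distrib[symmetric] sum.distrib)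
    also have "\<dots> = 1" using m t cN by simp
    finally show ?thesis .
  qed
  have C: "(\<Sum>j\<in>N. w j *\<^sub>R q j) = p"
  proof -
    have "(\<Sum>j\<in>N. w j *\<^sub>R q j) = (1 / (1 + t)) *\<^sub>R ((\<Sum>j\<in>N. \<mu> j *\<^sub>R q j) + t *\<^sub>R c)"
    proof -
      have "\<And>j. w j *\<^sub>R q j = (1 / (1 + t)) *\<^sub>R (\<mu> j *\<^sub>R q j + t *\<^sub>R ((1 / real (card N)) *\<^sub>R q j))"
      proof -
        fix j
        have "w j = 1 / (1 + t) * (\<mu> j + t * (1 / real (card N)))" by (simp add: w_def)
        then show "w j *\<^sub>R q j = (1 / (1 + t)) *\<^sub>R (\<mu> j *\<^sub>R q j + t *\<^sub>R ((1 / real (card N)) *\<^sub>R q j))"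
          by (simp only: scaleR_scaleR scaleR_add_left[symmetric])
      qed
      then have "(\<Sum>j\<in>N. w j *\<^sub>R q j) = (\<Sum>j\<in>N. (1 / (1 + t)) *\<^sub>R (\<mu> j *\<^sub>R q j + t *\<^sub>R ((1 / real (card N)) *\<^sub>R q j)))"
        by (rule sum.cong[OF refl])
      also have "\<dots> = (1 / (1 + t)) *\<^sub>R ((\<Sum>j\<in>N. \<mu> j *\<^sub>R q j) + t *\<^sub>R c)"
        unfolding c_def by (simp only: scaleR_sum_right[symmetric] sum.distrib)
      finally show ?thesis .
    qed
    also have "\<dots> = (1 / (1 + t)) *\<^sub>R ((1 + t) *\<^sub>R p)"
      using m(3) by (simp add: algebra_simps)
    also have "\<dots> = p" using t by simp
    finally show ?thesis .
  qed
  show ?thesis using A B C by (intro exI[of _ w]) blast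
qed


lemma max_principle:
  fixes x :: "'v::finite \<Rightarrow> real" and E :: "'v \<Rightarrow> 'v \<Rightarrow> bool"
  assumes conn: "\<And>u w. E\<^sup>*\<^sup>* u w"
    and Xne: "X \<noteq> {}"
    and pos: "\<And>i j. i \<notin> X \<Longrightarrow> E i j \<Longrightarrow> 0 < lam i j"
    and s1: "\<And>i. i \<notin> X \<Longrightarrow> sum (lam i) {j. E i j} = 1"
    and harm: "\<And>i. i \<notin> X \<Longrightarrow> x i = (\<Sum>j\<in>{j. E i j}. lam i j * x j)"
    and bd: "\<And>i. i \<in> X \<Longrightarrow> x i = 0"
  shows "x v \<le> 0"
proof -
  define m where "m = Max (range x)"
  have le: "x k \<le> m" for k unfolding m_def by simp
  have "m \<in> range x" unfolding m_def by (rule Max_in) auto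
  then obtain a where a: "x a = m" by auto
  have "\<exists>b\<in>X. x b = m"
  proof (rule ccontr)
    assume nb: "\<not> (\<exists>b\<in>X. x b = m)"
    have stepm: "x z = m" if xy: "x y = m" and eyz: "E y z" for y z
    proof -
      have yX: "y \<notin> X" using nb xy by auto
      let ?N = "{j. E y j}"
      have "(\<Sum>j\<in>?N. lam y j * (m - x j)) = (\<Sum>j\<in>?N. lam y j) * m - (\<Sum>j\<in>?N. lam y j * x j)"
        by (simp add: right_diff_distrib sum_subtractf sum_distrib_right)
      also have "\<dots> = 0" using s1[OF yX] harm[OF yX] xy by simp
      finally have z: "(\<Sum>j\<in>?N. lam y j * (m - x j)) = 0" .
      have nn: "\<forall>j\<in>?N. 0 \<le> lam y j * (m - x j)"
      proof
        fix j assume "j \<in> ?N"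
        then have "0 < lam y j" using pos[OF yX] by auto
        then show "0 \<le> lam y j * (m - x j)" using le[of j] by simp
      qed
      have "z \<in> ?N" using eyz by simp
      have "\<forall>j\<in>?N. lam y j * (m - x j) = 0"
        using sum_nonneg_eq_0_iff[of ?N "\<lambda>j. lam y j * (m - x j)"] z nn by simp
      then have "lam y z * (m - x z) = 0" using eyz by simp
      then show "x z = m" using pos[OF yX eyz] by simp
    qed
    have reach: "x b = m" if "E\<^sup>*\<^sup>* a b" for b using that
    proof (induction rule: rtranclp_induct)
      case base then show ?case using a by simp
    next
      case (step y z)
      then have h1: "x y = m" and h2: "E y z" by auto
      show ?case using stepm[OF h1 h2] .
    qed
    obtain b where "b \<in> X" using Xne by auto
    then show False using reach[OF conn[of a b]] nb by auto
  qed
  then obtain b where "b \<in> X" "x b = m" by auto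
  then have "m = 0" using bd by simp
  then show ?thesis using le[of v] by simp
qed

theorem lemma5p8:
  fixes E :: "'v::finite \<Rightarrow> 'v \<Rightarrow> bool" and q :: "'v \<Rightarrow> real^'d"
  assumes "simple_graph E"
    and "vertex_connected (CARD('d) + 1) E"
    and "CARD('v) \<ge> CARD('d) + 1"
    and "convex_containment q E"
  shows "\<exists>\<Omega> :: real^'v^'v. nonsym_equilibrium_stress q E \<Omega> \<and>
           dim {x :: real^'v. \<Omega> *v x = 0} = CARD('d) + 1"
proof -
  have irr: "\<not> E i i" for i using assms(1) unfolding simple_graph_def by auto
  have "card ({}::'v set) < CARD('d) + 1" by simp
  then have "connected_on E (UNIV - {})"
    using assms(2) unfolding vertex_connected_def by blast
  then have conn: "E\<^sup>*\<^sup>* u w" for u w unfolding connected_on_def by simp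
  obtain X where cX: "card X = CARD('d) + 1"
    and int: "\<And>i. i \<notin> X \<Longrightarrow> q i \<in> interior (convex hull (q ` neighbors E i))"
    using assms(4) unfolding convex_containment_def by blast
  have Xne: "X \<noteq> {}" using cX by auto
  have "\<forall>i. \<exists>w. i \<notin> X \<longrightarrow> (\<forall>j\<in>neighbors E i. 0 < w j) \<and> sum w (neighbors E i) = 1
      \<and> (\<Sum>j\<in>neighbors E i. w j *\<^sub>R q j) = q i"
    using interior_pos_weights[OF finite, OF int] by blast
  then obtain lam where lam: "\<And>i. i \<notin> X \<Longrightarrow> (\<forall>j\<in>neighbors E i. 0 < lam i j)
      \<and> sum (lam i) (neighbors E i) = 1 \<and> (\<Sum>j\<in>neighbors E i. lam i j *\<^sub>R q j) = q i"
    by metis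
  define Om :: "real^'v^'v" where
    "Om = (\<chi> i j. if i \<in> X then 0 else
            (if j = i then 1 else 0) - (if j \<in> neighbors E i then lam i j else 0))"
  have Om: "Om $ i $ j = (if i \<in> X then 0 else
            (if j = i then 1 else 0) - (if j \<in> neighbors E i then lam i j else 0))" for i j
    unfolding Om_def by simp
  have nin: "i \<notin> neighbors E i" for i using irr by (simp add: neighbors_def)
  have stress: "nonsym_equilibrium_stress q E Om"
    unfolding nonsym_equilibrium_stress_def
  proof (intro conjI allI impI)
    fix u w assume "u \<noteq> w \<and> \<not> E u w"
    then show "Om $ u $ w = 0" by (auto simp add: Om neighbors_def)
  next
    fix u
    show "(\<Sum>w\<in>UNIV. Om $ u $ w) = 0"
    proof (cases "u \<in> X")
      case True then show ?thesis by (simp add: Om)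
    next
      case False
      have "(\<Sum>w\<in>UNIV. Om $ u $ w) = (\<Sum>w\<in>UNIV. if w = u then 1 else 0)
          - (\<Sum>w\<in>UNIV. if w \<in> neighbors E u then lam u w else 0)"
        using False by (simp add: Om sum_subtractf)
      also have "\<dots> = 1 - sum (lam u) (neighbors E u)"
        by (simp add: sum.inter_restrict[symmetric])
      finally show ?thesis using lam[OF False] by simp
    qed
  next
    fix u
    show "(\<Sum>w\<in>UNIV. Om $ u $ w *\<^sub>R q w) = 0"
    proof (cases "u \<in> X")
      case True then show ?thesis by (simp add: Om)
    next
      case False
      have "\<And>w. Om $ u $ w *\<^sub>R q w = (if w = u then q w else 0)
          - (if w \<in> neighbors E u then lam u w *\<^sub>R q w else 0)"
        using False by (simp add: Om scaleR_diff_left)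
      then have "(\<Sum>w\<in>UNIV. Om $ u $ w *\<^sub>R q w) = (\<Sum>w\<in>UNIV. if w = u then q w else 0)
          - (\<Sum>w\<in>UNIV. if w \<in> neighbors E u then lam u w *\<^sub>R q w else 0)"
        by (simp add: sum_subtractf)
      also have "\<dots> = q u - (\<Sum>w\<in>neighbors E u. lam u w *\<^sub>R q w)"
        by (simp add: sum.inter_restrict[symmetric])
      finally show ?thesis using lam[OF False] by simp
    qed
  qed
  have mv: "(Om *v y) $ i = (if i \<in> X then 0 else y $ i - (\<Sum>j\<in>neighbors E i. lam i j * y $ j))"
    for y :: "real^'v" and i
  proof (cases "i \<in> X")
    case True then show ?thesis by (simp add: matrix_vector_mult_def Om)
  next
    case False
    have "\<And>j. Om $ i $ j * y $ j = (if j = i then y $ j else 0)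
          - (if j \<in> neighbors E i then lam i j * y $ j else 0)"
      using False by (simp add: Om left_diff_distrib)
    then have "(Om *v y) $ i = (\<Sum>j\<in>UNIV. if j = i then y $ j else 0)
          - (\<Sum>j\<in>UNIV. if j \<in> neighbors E i then lam i j * y $ j else 0)"
      by (simp add: matrix_vector_mult_def sum_subtractf)
    also have "\<dots> = y $ i - (\<Sum>j\<in>neighbors E i. lam i j * y $ j)"
      by (simp add: sum.inter_restrict[symmetric])
    finally show ?thesis using False by simp
  qed
  have uniq: "y = 0" if ker: "Om *v y = 0" and zX: "\<forall>i\<in>X. y $ i = 0" for y :: "real^'v"
  proof -
    have harm: "y $ i = (\<Sum>j\<in>{j. E i j}. lam i j * y $ j)" if "i \<notin> X" for i
      using mv[of y i] ker that by (simp add: neighbors_def vec_eq_iff)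
    have pos: "0 < lam i j" if "i \<notin> X" "E i j" for i j
      using lam[OF that(1)] that(2) by (simp add: neighbors_def)
    have s1: "sum (lam i) {j. E i j} = 1" if "i \<notin> X" for i
      using lam[OF that] by (simp add: neighbors_def)
    have a: "y $ v \<le> 0" for v
      by (rule max_principle[of E X lam "\<lambda>i. y $ i"]) (use conn Xne pos s1 harm zX in auto)
    have b: "- y $ v \<le> 0" for v
    proof (rule max_principle[of E X lam "\<lambda>i. - y $ i"])
      fix i assume "i \<notin> X"
      then show "- y $ i = (\<Sum>j\<in>{j. E i j}. lam i j * - y $ j)"
        using harm[of i] by (simp add: sum_negf)
    qed (use conn Xne pos s1 zX in auto)
    show ?thesis using a b by (simp add: vec_eq_iff antisym)
  qed
  define D :: "real^'v^'v" where
    "D = (\<chi> i j. if i \<in> X then (if j = i then 1 else 0) else Om $ i $ j)"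
  have Dv: "(D *v y) $ i = (if i \<in> X then y $ i else (Om *v y) $ i)" for y and i
  proof (cases "i \<in> X")
    case True
    have "\<And>j. D $ i $ j * y $ j = (if j = i then y $ j else 0)" using True by (simp add: D_def)
    then have "(D *v y) $ i = (\<Sum>j\<in>UNIV. if j = i then y $ j else 0)"
      unfolding matrix_vector_mult_def by simp
    then show ?thesis using True by simp
  next
    case False
    then show ?thesis by (simp add: matrix_vector_mult_def D_def)
  qed
  define G :: "real^'v^'v" where
    "G = (\<chi> i j. if i \<in> X \<and> j = i then 1 else 0)"
  have Gv: "(G *v y) $ i = (if i \<in> X then y $ i else 0)" for y and i
  proof -
    have "\<And>j. G $ i $ j * y $ j = (if j = i then (if i \<in> X then y $ j else 0) else 0)"
      by (simp add: G_def)
    then have "(G *v y) $ i = (\<Sum>j\<in>UNIV. if j = i then (if i \<in> X then y $ j else 0) else 0)"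
      unfolding matrix_vector_mult_def by simp
    then show ?thesis by simp
  qed
  have linD: "linear ((*v) D)" by (rule matrix_vector_mul_linear)
  have "inj ((*v) D)"
    unfolding linear_injective_0[OF linD]
  proof (intro allI impI)
    fix y :: "real^'v" assume "D *v y = 0"
    then have c: "(D *v y) $ i = 0" for i by simp
    have "Om *v y = 0" unfolding vec_eq_iff
    proof
      fix i show "(Om *v y) $ i = 0 $ i"
        using c[of i] Dv[of y i] mv[of y i] by (cases "i \<in> X") auto
    qed
    moreover have "\<forall>i\<in>X. y $ i = 0"
    proof
      fix i assume "i \<in> X" then show "y $ i = 0" using c[of i] Dv[of y i] by simp
    qed
    ultimately show "y = 0" by (rule uniq)
  qed
  then have surjD: "surj ((*v) D)"
    using linear_injective_imp_surjective[OF linD] by simp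
  define K where "K = {x :: real^'v. Om *v x = 0}"
  define S where "S = {x :: real^'v. \<forall>i. i \<notin> X \<longrightarrow> x $ i = 0}"
  have linG: "linear ((*v) G)" by (rule matrix_vector_mul_linear)
  have spanK: "span K = K"
    unfolding K_def span_eq_iff by (rule linear_subspace_kernel[OF matrix_vector_mul_linear])
  have injG: "inj_on ((*v) G) (span K)"
    unfolding spanK
  proof (rule inj_onI)
    fix y1 y2 assume y1: "y1 \<in> K" and y2: "y2 \<in> K" and e: "G *v y1 = G *v y2"
    have "Om *v (y1 - y2) = 0" using y1 y2 by (simp add: K_def matrix_vector_mult_diff_distrib)
    moreover have "\<forall>i\<in>X. (y1 - y2) $ i = 0"
    proof
      fix i assume "i \<in> X"
      then show "(y1 - y2) $ i = 0" using arg_cong[OF e, of "\<lambda>v. v $ i"] Gv by simp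
    qed
    ultimately have "y1 - y2 = 0" by (rule uniq)
    then show "y1 = y2" by simp
  qed
  have imG: "(*v) G ` K = S"
  proof
    show "(*v) G ` K \<subseteq> S" using Gv by (auto simp: S_def)
  next
    show "S \<subseteq> (*v) G ` K"
    proof
      fix a assume a: "a \<in> S"
      from surjD obtain y where y: "a = D *v y" by (rule surjE)
      have "Om *v y = 0" unfolding vec_eq_iff
      proof
        fix i show "(Om *v y) $ i = 0 $ i"
        proof (cases "i \<in> X")
          case True then show ?thesis using mv[of y i] by simp
        next
          case False then show ?thesis using Dv[of y i] y[symmetric] a by (simp add: S_def)
        qed
      qed
      moreover have "G *v y = a" unfolding vec_eq_iff
      proof
        fix i show "(G *v y) $ i = a $ i"
          using Gv[of y i] Dv[of y i] y[symmetric] a by (cases "i \<in> X") (simp_all add: S_def)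
      qed
      ultimately show "a \<in> (*v) G ` K" unfolding K_def by blast
    qed
  qed
  have "dim K = dim ((*v) G ` K)" using dim_image_eq[OF linG injG] by simp
  also have "\<dots> = card X" unfolding imG S_def unfolding dim_vec_eq[symmetric] by (rule dim_substandard_cart)
  finally have "dim K = CARD('d) + 1" using cX by simp
  then show ?thesis using stress unfolding K_def by blast
qed

end
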